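(* Let $\mathcal G$ be a synchronous game. There is $C>0$ depending only on $|A|$ such that: if $z^i_a\mapsto X^i_a$ is a unitary $\epsilon$-representation of the SynchBCS algebra $\mathscr B(\mathcal G)$ on $\mathbb C^d$ with respect to $\|\cdot\|_f$ (each $X^i_a$ unitary), then $p^i_a\mapsto\frac12(\mathbb 1-X^i_a)$ is a $C\epsilon$-representation of the synchronous algebra $\mathcal A(\mathcal G)$ with respect to $\|\cdot\|_f$.
   Context: A synchronous game has finite input set $I$, output set $A$ (same for both players) and predicate $V:A\times A\times I\times I\to\{0,1\}$ with $V(a,b|i,i)=0$ whenever $a\ne b$. The synchronous algebra $\mathcal A(\mathcal G)$ has generators $p^i_a$ and relations $(p^i_a)^2=p^i_a=(p^i_a)^*$; $\sum_ap^i_a=1$ for each $i$; $p^i_ap^j_b=0$ whenever $V(a,b|i,j)=0$. The SynchBCS algebra $\mathscr B(\mathcal G)$ has generators $z^i_a$ and relations: $z^i_a=(z^i_a)^*$; $(z^i_a)^2=1$; $\frac12(1+z^i_a+z^j_b-z^i_az^j_b)=1$ whenever $V(a,b|i,j)=0$; $\prod_{a\in A}z^i_a=-1$ for each $i$ (product in a fixed order of $A$); $z^i_az^i_{a'}=z^i_{a'}z^i_a$ for all $a,a'$. $\|A\|_f=\mathrm{tr}(A^*A)^{1/2}/\sqrt d$ is the little Frobenius norm on $M_d(\mathbb C)$. An $\epsilon$-representation is an assignment of matrices to generators (extended to a unital $*$-homomorphism of the free $*$-algebra) with $\|\phi(r)\|_f\le\epsilon$ for every defining relation $r$, a relation $a=b$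 meaning $r=a-b$. *)

theory Defs
  imports "Jordan_Normal_Form.Matrix"
begin

definition adj :: "complex mat \<Rightarrow> complex mat" where
  "adj M = mat (dim_col M) (dim_row M) (\<lambda>(i,j). cnj (M $$ (j,i)))"

definition mtrace :: "complex mat \<Rightarrow> complex" where
  "mtrace M = (\<Sum>i<dim_row M. M $$ (i,i))"

definition fnorm :: "complex mat \<Rightarrow> real" where
  "fnorm M = sqrt (Re (mtrace (adj M * M))) / sqrt (real (dim_row M))"

definition unitary_mat :: "nat \<Rightarrow> complex mat \<Rightarrow> bool" where
  "unitary_mat d U \<longleftrightarrow> U \<in> carrier_mat d d \<and> adj U * U = 1\<^sub>m d \<and> U * adj U = 1\<^sub>m d"

definition msum :: "nat \<Rightarrow> (nat \<Rightarrow> complex mat) \<Rightarrow> nat set \<Rightarrow> complex mat" where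
  "msum d f S = foldr (\<lambda>a M. f a + M) (sorted_list_of_set S) (0\<^sub>m d d)"

definition mprod :: "nat \<Rightarrow> (nat \<Rightarrow> complex mat) \<Rightarrow> nat set \<Rightarrow> complex mat" where
  "mprod d f S = foldr (\<lambda>a M. f a * M) (sorted_list_of_set S) (1\<^sub>m d)"

text \<open>Synchronous game with inputs I, outputs A, predicate V a b i j = V(a,b|i,j).\<close>
definition synchronous_game :: "nat set \<Rightarrow> nat set \<Rightarrow> (nat \<Rightarrow> nat \<Rightarrow> nat \<Rightarrow> nat \<Rightarrow> bool) \<Rightarrow> bool" where
  "synchronous_game I A V \<longleftrightarrow> finite I \<and> finite A \<and>
     (\<forall>i\<in>I. \<forall>a\<in>A. \<forall>b\<in>A. a \<noteq> b \<longrightarrow> \<not> V a b i i)"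

definition bcs_eps_rep ::
  "nat set \<Rightarrow> nat set \<Rightarrow> (nat \<Rightarrow> nat \<Rightarrow> nat \<Rightarrow> nat \<Rightarrow> bool) \<Rightarrow> nat \<Rightarrow> real \<Rightarrow> (nat \<Rightarrow> nat \<Rightarrow> complex mat) \<Rightarrow> bool" where
  "bcs_eps_rep I A V d \<epsilon> X \<longleftrightarrow>
     (\<forall>i\<in>I. \<forall>a\<in>A. X i a \<in> carrier_mat d d) \<and>
     (\<forall>i\<in>I. \<forall>a\<in>A. fnorm (X i a - adj (X i a)) \<le> \<epsilon>) \<and>
     (\<forall>i\<in>I. \<forall>a\<in>A. fnorm (X i a * X i a - 1\<^sub>m d) \<le> \<epsilon>) \<and>
     (\<forall>i\<in>I. \<forall>j\<in>I. \<forall>a\<in>A. \<forall>b\<in>A. \<not> V a b i j \<longrightarrow>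
        fnorm ((1/2 :: complex) \<cdot>\<^sub>m (1\<^sub>m d + X i a + X j b - X i a * X j b) - 1\<^sub>m d) \<le> \<epsilon>) \<and>
     (\<forall>i\<in>I. fnorm (mprod d (X i) A - (- 1\<^sub>m d)) \<le> \<epsilon>) \<and>
     (\<forall>i\<in>I. \<forall>a\<in>A. \<forall>a'\<in>A. fnorm (X i a * X i a' - X i a' * X i a) \<le> \<epsilon>)"

definition sync_eps_rep ::
  "nat set \<Rightarrow> nat set \<Rightarrow> (nat \<Rightarrow> nat \<Rightarrow> nat \<Rightarrow> nat \<Rightarrow> bool) \<Rightarrow> nat \<Rightarrow> real \<Rightarrow> (nat \<Rightarrow> nat \<Rightarrow> complex mat) \<Rightarrow> bool" where
  "sync_eps_rep I A V d \<epsilon> P \<longleftrightarrow>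
     (\<forall>i\<in>I. \<forall>a\<in>A. P i a \<in> carrier_mat d d) \<and>
     (\<forall>i\<in>I. \<forall>a\<in>A. fnorm (P i a * P i a - P i a) \<le> \<epsilon>) \<and>
     (\<forall>i\<in>I. \<forall>a\<in>A. fnorm (P i a - adj (P i a)) \<le> \<epsilon>) \<and>
     (\<forall>i\<in>I. fnorm (msum d (P i) A - 1\<^sub>m d) \<le> \<epsilon>) \<and>
     (\<forall>i\<in>I. \<forall>j\<in>I. \<forall>a\<in>A. \<forall>b\<in>A. \<not> V a b i j \<longrightarrow> fnorm (P i a * P j b - 0\<^sub>m d d) \<le> \<epsilon>)"

end

theory Submission imports Defs "HOL-Analysis.L2_Norm" begin

definition F :: "nat \<Rightarrow> complex mat \<Rightarrow> real" where
  "F d M = L2_set (\<lambda>p. cmod (M $$ p)) ({..<d}\<times>{..<d}) / sqrt (real d)"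

declare minus_carrier_mat[simp]

lemma adj_carrier[simp]: "M \<in> carrier_mat d d \<Longrightarrow> adj M \<in> carrier_mat d d"
  by (auto simp: adj_def)
lemma adj_dims[simp]: "dim_row (adj M) = dim_col M" "dim_col (adj M) = dim_row M"
  by (auto simp: adj_def)
lemma adj_index[simp]: "i < dim_col M \<Longrightarrow> j < dim_row M \<Longrightarrow> adj M $$ (i,j) = cnj (M $$ (j,i))"
  by (auto simp: adj_def)

lemma fnorm_F: assumes "M \<in> carrier_mat d d" shows "fnorm M = F d M"
proof -
  have "mtrace (adj M * M) = (\<Sum>i<d. \<Sum>k<d. cnj (M$$(k,i)) * M$$(k,i))"
    using assms by (auto simp: mtrace_def scalar_prod_def atLeast0LessThan intro!: sum.cong)
  also have "\<dots> = (\<Sum>i<d. \<Sum>k<d. complex_of_real ((cmod (M$$(k,i)))^2))"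
    by (intro sum.cong refl) (simp add: complex_norm_square mult.commute del: of_real_power)
  finally have "Re (mtrace (adj M * M)) = (\<Sum>i<d. \<Sum>k<d. (cmod (M$$(k,i)))^2)"
    by (simp add: Re_sum)
  also have "\<dots> = (\<Sum>k<d. \<Sum>i<d. (cmod (M$$(k,i)))^2)" by (rule sum.swap)
  also have "\<dots> = (\<Sum>p\<in>{..<d}\<times>{..<d}. (cmod (M$$p))^2)"
    by (simp add: sum.cartesian_product)
  finally show ?thesis using assms by (simp add: fnorm_def F_def L2_set_def)
qed

lemma F_ge0: "F d M \<ge> 0" by (simp add: F_def L2_set_def sum_nonneg)

lemma F_tri: assumes "\<And>i j. i<d \<Longrightarrow> j<d \<Longrightarrow> cmod (K$$(i,j)) \<le> cmod (M$$(i,j)) + cmod (N$$(i,j))"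
  shows "F d K \<le> F d M + F d N"
proof -
  have "L2_set (\<lambda>p. cmod (K $$ p)) ({..<d}\<times>{..<d}) \<le> L2_set (\<lambda>p. cmod (M $$ p) + cmod (N $$ p)) ({..<d}\<times>{..<d})"
    by (rule L2_set_mono) (use assms in auto)
  also have "\<dots> \<le> L2_set (\<lambda>p. cmod (M $$ p)) ({..<d}\<times>{..<d}) + L2_set (\<lambda>p. cmod (N $$ p)) ({..<d}\<times>{..<d})"
    by (rule L2_set_triangle_ineq)
  finally have "L2_set (\<lambda>p. cmod (K $$ p)) ({..<d}\<times>{..<d}) \<le> L2_set (\<lambda>p. cmod (M $$ p)) ({..<d}\<times>{..<d}) + L2_set (\<lambda>p. cmod (N $$ p)) ({..<d}\<times>{..<d})" .
  then show ?thesis unfolding F_def add_divide_distrib[symmetric] by (rule divide_right_mono) simp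
qed

lemma F_scale: assumes "\<And>i j. i<d \<Longrightarrow> j<d \<Longrightarrow> cmod (K$$(i,j)) = r * cmod (M$$(i,j))" "r \<ge> 0"
  shows "F d K = r * F d M"
proof -
  have "L2_set (\<lambda>p. cmod (K $$ p)) ({..<d}\<times>{..<d}) = L2_set (\<lambda>p. r * cmod (M $$ p)) ({..<d}\<times>{..<d})"
    by (rule L2_set_cong) (use assms in auto)
  also have "\<dots> = r * L2_set (\<lambda>p. cmod (M $$ p)) ({..<d}\<times>{..<d})"
    by (simp add: L2_set_right_distrib assms)
  finally show ?thesis unfolding F_def by simp
qed

lemma adj_mult: assumes A: "A \<in> carrier_mat d d" and B: "B \<in> carrier_mat d d"
  shows "adj (A * B) = adj B * adj A"
  by (rule eq_matI) (use A B in \<open>auto simp: scalar_prod_def cnj_sum mult.commute intro!: sum.cong\<close>)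

lemma fnorm_unitary: assumes U: "unitary_mat d U" and M: "M \<in> carrier_mat d d"
  shows "fnorm (U * M) = fnorm M"
proof -
  have Uc: "U \<in> carrier_mat d d" and UU: "adj U * U = 1\<^sub>m d" using U by (auto simp: unitary_mat_def)
  have "adj (U * M) * (U * M) = adj M * ((adj U * U) * M)"
    using Uc M by (simp add: adj_mult assoc_mult_mat[of _ d d _ d _ d])
  also have "\<dots> = adj M * M" using UU M by simp
  finally show ?thesis using Uc M by (simp add: fnorm_def)
qed

lemma fnorm_nonneg: "M \<in> carrier_mat d d \<Longrightarrow> fnorm M \<ge> 0" by (simp add: fnorm_F F_ge0)

lemma fnorm_add: assumes "M \<in> carrier_mat d d" "N \<in> carrier_mat d d" shows "fnorm (M + N) \<le> fnorm M + fnorm N"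
proof -
  have "fnorm (M + N) = F d (M + N)" by (rule fnorm_F) (use assms in simp)
  also have "\<dots> \<le> F d M + F d N" by (rule F_tri) (use assms in \<open>simp add: norm_triangle_ineq\<close>)
  finally show ?thesis using assms by (simp add: fnorm_F)
qed

lemma fnorm_diff: assumes "M \<in> carrier_mat d d" "N \<in> carrier_mat d d" shows "fnorm (M - N) \<le> fnorm M + fnorm N"
proof -
  have "fnorm (M - N) = F d (M - N)" by (rule fnorm_F) (use assms in simp)
  also have "\<dots> \<le> F d M + F d N" by (rule F_tri) (use assms in \<open>simp add: norm_triangle_ineq4\<close>)
  finally show ?thesis using assms by (simp add: fnorm_F)
qed

lemma fnorm_smult: assumes "M \<in> carrier_mat d d" shows "fnorm (c \<cdot>\<^sub>m M) = cmod c * fnorm M"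
proof -
  have "fnorm (c \<cdot>\<^sub>m M) = F d (c \<cdot>\<^sub>m M)" by (rule fnorm_F) (use assms in simp)
  also have "\<dots> = cmod c * F d M" by (rule F_scale) (use assms in \<open>simp_all add: norm_mult\<close>)
  finally show ?thesis using assms by (simp add: fnorm_F)
qed

lemma fnorm_zero: "fnorm (0\<^sub>m d d) = 0"
proof -
  have "(0\<^sub>m d d :: complex mat) \<in> carrier_mat d d" by simp
  then show ?thesis by (simp only: fnorm_F) (auto simp: F_def L2_set_def intro!: sum.neutral)
qed

lemma smult_smult_mat: "(a::'a::semigroup_mult) \<cdot>\<^sub>m (b \<cdot>\<^sub>m A) = (a * b) \<cdot>\<^sub>m A"
  by (rule eq_matI) (auto simp: mult.assoc)

lemma step_alg: fixes X R S :: "complex mat" assumes X: "X \<in> carrier_mat d d" and R: "R \<in> carrier_mat d d" and S: "S \<in> carrier_mat d d"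
  shows "X * R - (1\<^sub>m d - 2 \<cdot>\<^sub>m ((1/2) \<cdot>\<^sub>m (1\<^sub>m d - X) + S)) =
     X * (R - (1\<^sub>m d - 2 \<cdot>\<^sub>m S)) + 4 \<cdot>\<^sub>m (((1/2) \<cdot>\<^sub>m (1\<^sub>m d - X)) * S)"
proof -
  have e1: "X * (R - (1\<^sub>m d - 2 \<cdot>\<^sub>m S)) = X * R - (X - 2 \<cdot>\<^sub>m (X * S))"
  proof -
    have "X * (R - (1\<^sub>m d - 2 \<cdot>\<^sub>m S)) = X * R - X * (1\<^sub>m d - 2 \<cdot>\<^sub>m S)"
      by (rule mult_minus_distrib_mat[of X d d]) (use X R S in auto)
    also have "X * (1\<^sub>m d - 2 \<cdot>\<^sub>m S) = X * 1\<^sub>m d - X * (2 \<cdot>\<^sub>m S)"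
      by (rule mult_minus_distrib_mat[of X d d]) (use X R S in auto)
    also have "X * (2 \<cdot>\<^sub>m S) = 2 \<cdot>\<^sub>m (X * S)" by (rule mult_smult_distrib) (use X S in auto)
    finally show ?thesis using X by simp
  qed
  have e2: "((1/2) \<cdot>\<^sub>m (1\<^sub>m d - X)) * S = (1/2) \<cdot>\<^sub>m (S - X * S)"
  proof -
    have "((1/2) \<cdot>\<^sub>m (1\<^sub>m d - X)) * S = (1/2) \<cdot>\<^sub>m ((1\<^sub>m d - X) * S)"
      by (rule mult_smult_assoc_mat) (use X S in auto)
    also have "(1\<^sub>m d - X) * S = 1\<^sub>m d * S - X * S"
      by (rule minus_mult_distrib_mat) (use X S in auto)
    finally show ?thesis using S by simp
  qed
  show ?thesis unfolding e1 e2
    by (rule eq_matI) (use X R S in \<open>auto simp: algebra_simps\<close>)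
qed

lemma prod_alg: fixes X Y :: "complex mat" assumes X: "X \<in> carrier_mat d d" and Y: "Y \<in> carrier_mat d d"
  shows "((1/2) \<cdot>\<^sub>m (1\<^sub>m d - X)) * ((1/2) \<cdot>\<^sub>m (1\<^sub>m d - Y)) = (1/4) \<cdot>\<^sub>m (1\<^sub>m d - X - Y + X * Y)"
proof -
  have "((1/2) \<cdot>\<^sub>m (1\<^sub>m d - X)) * ((1/2) \<cdot>\<^sub>m (1\<^sub>m d - Y)) = (1/4) \<cdot>\<^sub>m ((1\<^sub>m d - X) * (1\<^sub>m d - Y))"
  proof -
    have "((1/2) \<cdot>\<^sub>m (1\<^sub>m d - X)) * ((1/2) \<cdot>\<^sub>m (1\<^sub>m d - Y)) = (1/2) \<cdot>\<^sub>m ((1\<^sub>m d - X) * ((1/2) \<cdot>\<^sub>m (1\<^sub>m d - Y)))"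
      by (rule mult_smult_assoc_mat) (use X Y in auto)
    also have "(1\<^sub>m d - X) * ((1/2) \<cdot>\<^sub>m (1\<^sub>m d - Y)) = (1/2) \<cdot>\<^sub>m ((1\<^sub>m d - X) * (1\<^sub>m d - Y))"
      by (rule mult_smult_distrib) (use X Y in auto)
    finally show ?thesis by (simp add: smult_smult_mat)
  qed
  also have "(1\<^sub>m d - X) * (1\<^sub>m d - Y) = (1\<^sub>m d - Y) - (X - X * Y)"
  proof -
    have "(1\<^sub>m d - X) * (1\<^sub>m d - Y) = 1\<^sub>m d * (1\<^sub>m d - Y) - X * (1\<^sub>m d - Y)"
      by (rule minus_mult_distrib_mat) (use X Y in auto)
    also have "X * (1\<^sub>m d - Y) = X * 1\<^sub>m d - X * Y"
      by (rule mult_minus_distrib_mat) (use X Y in auto)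
    finally show ?thesis using X Y by simp
  qed
  finally show ?thesis
    by (simp, intro eq_matI) (use X Y in \<open>auto simp: algebra_simps\<close>)
qed

lemma foldr_sum_carrier: "(\<forall>b\<in>set L. P b \<in> carrier_mat d d) \<Longrightarrow> foldr (\<lambda>b M. P b + M) L (0\<^sub>m d d) \<in> carrier_mat d d"
  by (induction L) auto

lemma foldr_prod_carrier: "(\<forall>b\<in>set L. (X b :: complex mat) \<in> carrier_mat d d) \<Longrightarrow> foldr (\<lambda>b M. X b * M) L (1\<^sub>m d) \<in> carrier_mat d d"
  by (induction L) auto

lemma PS_bound:
  fixes X P :: "nat \<Rightarrow> complex mat"
  assumes car: "\<forall>b\<in>A. X b \<in> carrier_mat d d"
    and P_def: "P = (\<lambda>b. (1/2::complex) \<cdot>\<^sub>m (1\<^sub>m d - X b))"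
    and pair: "\<forall>b\<in>A. b \<noteq> a \<longrightarrow> fnorm (P a * P b) \<le> e / 2"
    and aA: "a \<in> A"
  shows "set L \<subseteq> A \<Longrightarrow> a \<notin> set L \<Longrightarrow> fnorm (P a * foldr (\<lambda>b M. P b + M) L (0\<^sub>m d d)) \<le> real (length L) * e / 2"
proof (induction L)
  case Nil
  have "P a * 0\<^sub>m d d = 0\<^sub>m d d" using car aA P_def by auto
  then show ?case by (simp add: fnorm_zero)
next
  case (Cons b L)
  have Pc: "\<forall>c\<in>A. P c \<in> carrier_mat d d" using car P_def by auto
  have Sc: "foldr (\<lambda>b M. P b + M) L (0\<^sub>m d d) \<in> carrier_mat d d"
    by (rule foldr_sum_carrier) (use Pc Cons.prems in auto)
  have "P a * foldr (\<lambda>b M. P b + M) (b # L) (0\<^sub>m d d) = P a * P b + P a * foldr (\<lambda>b M. P b + M) L (0\<^sub>m d d)"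
    using Pc Sc aA Cons.prems by (simp, intro mult_add_distrib_mat[of _ d d]) auto
  also have "fnorm \<dots> \<le> fnorm (P a * P b) + fnorm (P a * foldr (\<lambda>b M. P b + M) L (0\<^sub>m d d))"
    by (rule fnorm_add[where d=d]) (use Pc Sc aA Cons.prems in \<open>auto intro!: mult_carrier_mat[of _ d d]\<close>)
  also have "\<dots> \<le> e / 2 + real (length L) * e / 2"
    using pair Cons by auto
  finally show ?case by (simp add: field_simps)
qed

lemma R_bound:
  fixes X P :: "nat \<Rightarrow> complex mat"
  assumes car: "\<forall>b\<in>A. X b \<in> carrier_mat d d"
    and uni: "\<forall>b\<in>A. unitary_mat d (X b)"
    and P_def: "P = (\<lambda>b. (1/2::complex) \<cdot>\<^sub>m (1\<^sub>m d - X b))"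
    and pair: "\<forall>a\<in>A. \<forall>b\<in>A. b \<noteq> a \<longrightarrow> fnorm (P a * P b) \<le> e / 2"
    and e: "e \<ge> 0"
  shows "set L \<subseteq> A \<Longrightarrow> distinct L \<Longrightarrow>
    fnorm (foldr (\<lambda>b M. X b * M) L (1\<^sub>m d) - (1\<^sub>m d - 2 \<cdot>\<^sub>m foldr (\<lambda>b M. P b + M) L (0\<^sub>m d d))) \<le> (real (length L))^2 * e"
proof (induction L)
  case Nil
  have "(1\<^sub>m d :: complex mat) - (1\<^sub>m d - 2 \<cdot>\<^sub>m 0\<^sub>m d d) = 0\<^sub>m d d" by (rule eq_matI) auto
  then show ?case by (simp add: fnorm_zero)
next
  case (Cons a L)
  have Pc: "\<forall>c\<in>A. P c \<in> carrier_mat d d" using car P_def by auto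
  have aA: "a \<in> A" using Cons.prems by auto
  define S where "S = foldr (\<lambda>b M. P b + M) L (0\<^sub>m d d)"
  define R where "R = foldr (\<lambda>b M. X b * M) L (1\<^sub>m d)"
  have Sc: "S \<in> carrier_mat d d" unfolding S_def
    by (rule foldr_sum_carrier) (use Pc Cons.prems in auto)
  have Rc: "R \<in> carrier_mat d d" unfolding R_def
    by (rule foldr_prod_carrier) (use car Cons.prems in auto)
  have Xa: "X a \<in> carrier_mat d d" using car aA by auto
  have "foldr (\<lambda>b M. X b * M) (a # L) (1\<^sub>m d) - (1\<^sub>m d - 2 \<cdot>\<^sub>m foldr (\<lambda>b M. P b + M) (a # L) (0\<^sub>m d d))
      = X a * R - (1\<^sub>m d - 2 \<cdot>\<^sub>m ((1/2) \<cdot>\<^sub>m (1\<^sub>m d - X a) + S))"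
    by (simp add: R_def S_def P_def)
  also have "\<dots> = X a * (R - (1\<^sub>m d - 2 \<cdot>\<^sub>m S)) + 4 \<cdot>\<^sub>m (P a * S)"
    unfolding P_def by (rule step_alg[OF Xa Rc Sc])
  also have "fnorm \<dots> \<le> fnorm (X a * (R - (1\<^sub>m d - 2 \<cdot>\<^sub>m S))) + fnorm (4 \<cdot>\<^sub>m (P a * S))"
    by (rule fnorm_add[where d=d]) (use Xa Rc Sc Pc aA in auto)
  also have "fnorm (X a * (R - (1\<^sub>m d - 2 \<cdot>\<^sub>m S))) = fnorm (R - (1\<^sub>m d - 2 \<cdot>\<^sub>m S))"
    by (rule fnorm_unitary) (use uni aA Rc Sc in auto)
  also have "fnorm (4 \<cdot>\<^sub>m (P a * S)) = 4 * fnorm (P a * S)"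
  proof -
    have "P a * S \<in> carrier_mat d d" using Pc aA Sc by auto
    from fnorm_smult[OF this, of 4] show ?thesis by simp
  qed
  also have "fnorm (R - (1\<^sub>m d - 2 \<cdot>\<^sub>m S)) \<le> (real (length L))^2 * e"
    using Cons unfolding R_def S_def by auto
  also have "fnorm (P a * S) \<le> real (length L) * e / 2"
    unfolding S_def by (rule PS_bound[OF car P_def _ aA]) (use pair aA Cons.prems in auto)
  finally have "fnorm (foldr (\<lambda>b M. X b * M) (a # L) (1\<^sub>m d) - (1\<^sub>m d - 2 \<cdot>\<^sub>m foldr (\<lambda>b M. P b + M) (a # L) (0\<^sub>m d d)))
     \<le> (real (length L))^2 * e + 4 * (real (length L) * e / 2)" by simp
  also have "\<dots> \<le> (real (length (a # L)))^2 * e"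
    using e by (simp add: power2_eq_square algebra_simps)
  finally show ?case .
qed

lemma pair_eq:
  fixes X Y :: "complex mat"
  assumes X: "X \<in> carrier_mat d d" and Y: "Y \<in> carrier_mat d d"
  shows "((1/2) \<cdot>\<^sub>m (1\<^sub>m d - X)) * ((1/2) \<cdot>\<^sub>m (1\<^sub>m d - Y)) - 0\<^sub>m d d
     = (-1/2) \<cdot>\<^sub>m ((1/2) \<cdot>\<^sub>m (1\<^sub>m d + X + Y - X * Y) - 1\<^sub>m d)"
  unfolding prod_alg[OF X Y]
  by (rule eq_matI) (use X Y in \<open>auto simp: algebra_simps\<close>)

lemma pair_bound:
  fixes X Y :: "complex mat"
  assumes X: "X \<in> carrier_mat d d" and Y: "Y \<in> carrier_mat d d"
    and h: "fnorm ((1/2) \<cdot>\<^sub>m (1\<^sub>m d + X + Y - X * Y) - 1\<^sub>m d) \<le> e"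
  shows "fnorm (((1/2) \<cdot>\<^sub>m (1\<^sub>m d - X)) * ((1/2) \<cdot>\<^sub>m (1\<^sub>m d - Y)) - 0\<^sub>m d d) \<le> e / 2"
    and "fnorm (((1/2) \<cdot>\<^sub>m (1\<^sub>m d - X)) * ((1/2) \<cdot>\<^sub>m (1\<^sub>m d - Y))) \<le> e / 2"
proof -
  have c: "(1/2) \<cdot>\<^sub>m (1\<^sub>m d + X + Y - X * Y) - 1\<^sub>m d \<in> carrier_mat d d" using X Y by simp
  have "fnorm (((1/2) \<cdot>\<^sub>m (1\<^sub>m d - X)) * ((1/2) \<cdot>\<^sub>m (1\<^sub>m d - Y)) - 0\<^sub>m d d)
     = cmod (-1/2) * fnorm ((1/2) \<cdot>\<^sub>m (1\<^sub>m d + X + Y - X * Y) - 1\<^sub>m d)"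
    unfolding pair_eq[OF X Y] by (rule fnorm_smult[OF c])
  also have "\<dots> \<le> e / 2" using h by simp
  finally show 1: "fnorm (((1/2) \<cdot>\<^sub>m (1\<^sub>m d - X)) * ((1/2) \<cdot>\<^sub>m (1\<^sub>m d - Y)) - 0\<^sub>m d d) \<le> e / 2" .
  have "((1/2) \<cdot>\<^sub>m (1\<^sub>m d - X)) * ((1/2) \<cdot>\<^sub>m (1\<^sub>m d - Y)) - 0\<^sub>m d d = ((1/2) \<cdot>\<^sub>m (1\<^sub>m d - X)) * ((1/2) \<cdot>\<^sub>m (1\<^sub>m d - Y))"
    by (rule eq_matI) (use X Y in auto)
  with 1 show "fnorm (((1/2) \<cdot>\<^sub>m (1\<^sub>m d - X)) * ((1/2) \<cdot>\<^sub>m (1\<^sub>m d - Y))) \<le> e / 2" by simp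
qed

lemma idem_bound:
  fixes X :: "complex mat"
  assumes X: "X \<in> carrier_mat d d"
  shows "fnorm (((1/2) \<cdot>\<^sub>m (1\<^sub>m d - X)) * ((1/2) \<cdot>\<^sub>m (1\<^sub>m d - X)) - (1/2) \<cdot>\<^sub>m (1\<^sub>m d - X)) = fnorm (X * X - 1\<^sub>m d) / 4"
proof -
  have "((1/2) \<cdot>\<^sub>m (1\<^sub>m d - X)) * ((1/2) \<cdot>\<^sub>m (1\<^sub>m d - X)) - (1/2) \<cdot>\<^sub>m (1\<^sub>m d - X) = (1/4) \<cdot>\<^sub>m (X * X - 1\<^sub>m d)"
    unfolding prod_alg[OF X X]
    by (rule eq_matI) (use X in \<open>auto simp: algebra_simps\<close>)
  moreover have c: "X * X - 1\<^sub>m d \<in> carrier_mat d d" using X by simp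
  ultimately show ?thesis using fnorm_smult[OF c, of "1/4"] by simp
qed

lemma adj_bound:
  fixes X :: "complex mat"
  assumes X: "X \<in> carrier_mat d d"
  shows "fnorm ((1/2) \<cdot>\<^sub>m (1\<^sub>m d - X) - adj ((1/2) \<cdot>\<^sub>m (1\<^sub>m d - X))) = fnorm (X - adj X) / 2"
proof -
  have "(1/2) \<cdot>\<^sub>m (1\<^sub>m d - X) - adj ((1/2) \<cdot>\<^sub>m (1\<^sub>m d - X)) = (-1/2) \<cdot>\<^sub>m (X - adj X)"
    by (rule eq_matI) (use X in \<open>auto simp: algebra_simps\<close>)
  moreover have c: "X - adj X \<in> carrier_mat d d" using X by simp
  ultimately show ?thesis using fnorm_smult[OF c, of "-1/2"] by simp
qed

lemma sum_eq:
  fixes R S :: "complex mat"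
  assumes R: "R \<in> carrier_mat d d" and S: "S \<in> carrier_mat d d"
  shows "S - 1\<^sub>m d = (1/2) \<cdot>\<^sub>m ((R - (1\<^sub>m d - 2 \<cdot>\<^sub>m S)) - (R - (- 1\<^sub>m d)))"
  by (rule eq_matI) (use R S in \<open>auto simp: algebra_simps\<close>)

theorem mainTheorem14:
  fixes n :: nat
  shows "\<exists>C>0. \<forall>(I::nat set) (A::nat set) V d (\<epsilon>::real) X.
     synchronous_game I A V \<and> card A = n \<and>
     (\<forall>i\<in>I. \<forall>a\<in>A. unitary_mat d (X i a)) \<and>
     bcs_eps_rep I A V d \<epsilon> X \<longrightarrow>
     sync_eps_rep I A V d (C * \<epsilon>) (\<lambda>i a. (1/2 :: complex) \<cdot>\<^sub>m (1\<^sub>m d - X i a))"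
proof (rule exI[of _ "(real n)^2 + 1"], intro conjI allI impI)
  show "0 < (real n)^2 + 1" by (simp add: add_nonneg_pos)
  fix I A :: "nat set" and V d and \<epsilon> :: real and X :: "nat \<Rightarrow> nat \<Rightarrow> complex mat"
  assume H: "synchronous_game I A V \<and> card A = n \<and> (\<forall>i\<in>I. \<forall>a\<in>A. unitary_mat d (X i a)) \<and> bcs_eps_rep I A V d \<epsilon> X"
  let ?C = "(real n)^2 + 1"
  define P where "P = (\<lambda>i a. (1/2 :: complex) \<cdot>\<^sub>m (1\<^sub>m d - X i a))"
  have finA: "finite A" and sync: "\<forall>i\<in>I. \<forall>a\<in>A. \<forall>b\<in>A. a \<noteq> b \<longrightarrow> \<not> V a b i i"
    using H by (auto simp: synchronous_game_def)
  have cardA: "card A = n" using H by auto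
  have uni: "\<forall>i\<in>I. \<forall>a\<in>A. unitary_mat d (X i a)" using H by auto
  have car: "\<forall>i\<in>I. \<forall>a\<in>A. X i a \<in> carrier_mat d d"
    and b2: "\<forall>i\<in>I. \<forall>a\<in>A. fnorm (X i a - adj (X i a)) \<le> \<epsilon>"
    and b3: "\<forall>i\<in>I. \<forall>a\<in>A. fnorm (X i a * X i a - 1\<^sub>m d) \<le> \<epsilon>"
    and b4: "\<forall>i\<in>I. \<forall>j\<in>I. \<forall>a\<in>A. \<forall>b\<in>A. \<not> V a b i j \<longrightarrow>
        fnorm ((1/2 :: complex) \<cdot>\<^sub>m (1\<^sub>m d + X i a + X j b - X i a * X j b) - 1\<^sub>m d) \<le> \<epsilon>"
    and b5: "\<forall>i\<in>I. fnorm (mprod d (X i) A - (- 1\<^sub>m d)) \<le> \<epsilon>"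
    using H by (auto simp: bcs_eps_rep_def)
  have L: "set (sorted_list_of_set A) = A" "distinct (sorted_list_of_set A)" "length (sorted_list_of_set A) = n"
    using finA cardA by auto
  have e0: "0 \<le> \<epsilon>" if "i \<in> I" for i
  proof -
    have "mprod d (X i) A \<in> carrier_mat d d" unfolding mprod_def
      by (rule foldr_prod_carrier) (use car that L in auto)
    then have "0 \<le> fnorm (mprod d (X i) A - (- 1\<^sub>m d))" by (intro fnorm_nonneg[where d=d]) simp
    with b5 that show ?thesis by force
  qed
  have C1: "\<epsilon> \<le> ?C * \<epsilon>" if "i \<in> I" for i
  proof -
    have "0 \<le> (real n)^2 * \<epsilon>" using e0[OF that] by simp
    then show ?thesis by (simp add: algebra_simps)
  qed
  have pairb: "fnorm (P i a * P j b) \<le> \<epsilon> / 2" "fnorm (P i a * P j b - 0\<^sub>m d d) \<le> \<epsilon> / 2"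
    if "i \<in> I" "j \<in> I" "a \<in> A" "b \<in> A" "\<not> V a b i j" for i j a b
    using pair_bound[of "X i a" d "X j b" \<epsilon>] car b4 that unfolding P_def by auto
  show "sync_eps_rep I A V d (?C * \<epsilon>) P"
    unfolding sync_eps_rep_def
  proof (intro conjI ballI impI)
    fix i a assume i: "i \<in> I" and a: "a \<in> A"
    show "P i a \<in> carrier_mat d d" using car i a by (simp add: P_def)
    have Xc: "X i a \<in> carrier_mat d d" using car i a by auto
    have "fnorm (P i a * P i a - P i a) = fnorm (X i a * X i a - 1\<^sub>m d) / 4"
      unfolding P_def by (rule idem_bound[OF Xc])
    also have "\<dots> \<le> \<epsilon>" using bspec[OF bspec[OF b3 i] a] e0[OF i] by linarith
    also have "\<dots> \<le> ?C * \<epsilon>" using e0[OF i] C1[OF i] by linarith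
    finally show "fnorm (P i a * P i a - P i a) \<le> ?C * \<epsilon>" .
    have "fnorm (P i a - adj (P i a)) = fnorm (X i a - adj (X i a)) / 2"
      unfolding P_def by (rule adj_bound[OF Xc])
    also have "\<dots> \<le> \<epsilon>" using bspec[OF bspec[OF b2 i] a] e0[OF i] by linarith
    also have "\<dots> \<le> ?C * \<epsilon>" using e0[OF i] C1[OF i] by linarith
    finally show "fnorm (P i a - adj (P i a)) \<le> ?C * \<epsilon>" .
  next
    fix i j a b assume i: "i \<in> I" and j: "j \<in> I" and a: "a \<in> A" and b: "b \<in> A" and v: "\<not> V a b i j"
    have "fnorm (P i a * P j b - 0\<^sub>m d d) \<le> \<epsilon> / 2" by (rule pairb(2)[OF i j a b v])
    also have "\<dots> \<le> ?C * \<epsilon>" using e0[OF i] C1[OF i] by linarith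
    finally show "fnorm (P i a * P j b - 0\<^sub>m d d) \<le> ?C * \<epsilon>" .
  next
    fix i assume i: "i \<in> I"
    define Ls where "Ls = sorted_list_of_set A"
    define R where "R = foldr (\<lambda>b M. X i b * M) Ls (1\<^sub>m d)"
    define S where "S = foldr (\<lambda>b M. P i b + M) Ls (0\<^sub>m d d)"
    have Rc: "R \<in> carrier_mat d d" unfolding R_def
      by (rule foldr_prod_carrier) (use car i L in \<open>auto simp: Ls_def\<close>)
    have Sc: "S \<in> carrier_mat d d" unfolding S_def
      by (rule foldr_sum_carrier) (use car i L in \<open>auto simp: Ls_def P_def\<close>)
    have msum: "msum d (P i) A = S" by (simp add: msum_def S_def Ls_def)
    have mprod: "mprod d (X i) A = R" by (simp add: mprod_def R_def Ls_def)
    have E: "fnorm (R - (1\<^sub>m d - 2 \<cdot>\<^sub>m S)) \<le> (real n)^2 * \<epsilon>"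
    proof -
      have "fnorm (R - (1\<^sub>m d - 2 \<cdot>\<^sub>m S)) \<le> (real (length Ls))^2 * \<epsilon>"
        unfolding R_def S_def
      proof (rule R_bound[where A=A and X="X i" and P="P i"])
        show "\<forall>b\<in>A. X i b \<in> carrier_mat d d" using car i by auto
        show "\<forall>b\<in>A. unitary_mat d (X i b)" using uni i by auto
        show "P i = (\<lambda>b. (1/2::complex) \<cdot>\<^sub>m (1\<^sub>m d - X i b))" by (simp add: P_def)
        show "\<forall>a\<in>A. \<forall>b\<in>A. b \<noteq> a \<longrightarrow> fnorm (P i a * P i b) \<le> \<epsilon> / 2"
          using pairb(1)[OF i i] sync i by metis
        show "0 \<le> \<epsilon>" by (rule e0[OF i])
        show "set Ls \<subseteq> A" "distinct Ls" using L by (auto simp: Ls_def)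
      qed
      then show ?thesis using L by (simp add: Ls_def)
    qed
    have "fnorm (msum d (P i) A - 1\<^sub>m d) = fnorm ((1/2) \<cdot>\<^sub>m ((R - (1\<^sub>m d - 2 \<cdot>\<^sub>m S)) - (R - (- 1\<^sub>m d))))"
      unfolding msum sum_eq[OF Rc Sc] ..
    also have "\<dots> = cmod (1/2) * fnorm ((R - (1\<^sub>m d - 2 \<cdot>\<^sub>m S)) - (R - (- 1\<^sub>m d)))"
      by (rule fnorm_smult[where d=d]) (use Rc Sc in simp)
    also have "fnorm ((R - (1\<^sub>m d - 2 \<cdot>\<^sub>m S)) - (R - (- 1\<^sub>m d))) \<le> fnorm (R - (1\<^sub>m d - 2 \<cdot>\<^sub>m S)) + fnorm (R - (- 1\<^sub>m d))"
      by (rule fnorm_diff[where d=d]) (use Rc Sc in auto)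
    finally have "fnorm (msum d (P i) A - 1\<^sub>m d) \<le> (fnorm (R - (1\<^sub>m d - 2 \<cdot>\<^sub>m S)) + fnorm (R - (- 1\<^sub>m d))) / 2"
      by simp
    also have "\<dots> \<le> ((real n)^2 * \<epsilon> + \<epsilon>) / 2" using E b5 i mprod by (intro divide_right_mono add_mono) auto
    also have "\<dots> \<le> ?C * \<epsilon>" using e0[OF i] by (simp add: algebra_simps)
    finally show "fnorm (msum d (P i) A - 1\<^sub>m d) \<le> ?C * \<epsilon>" .
  qed
qed

end
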